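(* Consider a parallel-link network with $n=2$ links, unit demand and latencies $\ell_1,\ell_2\in\mathcal{L}_c$. Let $t\in\mathcal{T}(\infty)$ and suppose $x_1(t)>0$ and $x_2(t)>0$. Then $x_1(0)\ge x_1(t)$ if and only if $x_1(t)\ge \frac12$.
   Context: $\mathcal{L}_c$: strictly increasing, convex, continuously differentiable functions $\mathbb{R}_+\to\mathbb{R}_+$. Flows $x\in\mathbb{R}^2_+$ with $x_1+x_2=1$. For tolls $t\in\mathbb{R}^2_+$, $x(t)$ is the unique Wardrop equilibrium for $t$ (for all $i,j$ with $x_i>0$: $\ell_i(x_i)+t_i\le\ell_j(x_j)+t_j$); $x(0)$ is the untolled Wardrop equilibrium. Profit $\Pi_i(t)=t_ix_i(t)$. $\mathcal{T}(\infty)$: toll vectors $t\in\mathbb{R}^2_+$ such that for every $i$ and every $t'_i\ge 0$, $\Pi_i(t_i,t_{-i})\ge\Pi_i(t'_i,t_{-i})$ (flow recomputed). *)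

theory Defs
  imports "HOL-Analysis.Analysis"
begin

definition latency_class :: "(real \<Rightarrow> real) \<Rightarrow> bool" where
  "latency_class l \<longleftrightarrow>
     (\<forall>x\<ge>0. l x \<ge> 0) \<and>
     strict_mono_on {0..} l \<and>
     convex_on {0..} l \<and>
     (\<exists>l'. (\<forall>x\<ge>0. (l has_real_derivative l' x) (at x within {0..})) \<and> continuous_on {0..} l')"

definition wardrop :: "(real \<Rightarrow> real) \<Rightarrow> (real \<Rightarrow> real) \<Rightarrow> real \<times> real \<Rightarrow> real \<times> real \<Rightarrow> bool" where
  "wardrop l1 l2 t x \<longleftrightarrow>
     fst x \<ge> 0 \<and> snd x \<ge> 0 \<and> fst x + snd x = 1 \<and>
     (fst x > 0 \<longrightarrow> l1 (fst x) + fst t \<le> l2 (snd x) + snd t) \<and>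
     (snd x > 0 \<longrightarrow> l2 (snd x) + snd t \<le> l1 (fst x) + fst t)"

definition eqflow :: "(real \<Rightarrow> real) \<Rightarrow> (real \<Rightarrow> real) \<Rightarrow> real \<times> real \<Rightarrow> real \<times> real" where
  "eqflow l1 l2 t = (THE x. wardrop l1 l2 t x)"

definition profit1 :: "(real \<Rightarrow> real) \<Rightarrow> (real \<Rightarrow> real) \<Rightarrow> real \<times> real \<Rightarrow> real" where
  "profit1 l1 l2 t = fst t * fst (eqflow l1 l2 t)"

definition profit2 :: "(real \<Rightarrow> real) \<Rightarrow> (real \<Rightarrow> real) \<Rightarrow> real \<times> real \<Rightarrow> real" where
  "profit2 l1 l2 t = snd t * snd (eqflow l1 l2 t)"

definition T_inf :: "(real \<Rightarrow> real) \<Rightarrow> (real \<Rightarrow> real) \<Rightarrow> (real \<times> real) set" where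
  "T_inf l1 l2 = {t. fst t \<ge> 0 \<and> snd t \<ge> 0 \<and>
     (\<forall>s\<ge>0. profit1 l1 l2 t \<ge> profit1 l1 l2 (s, snd t)) \<and>
     (\<forall>s\<ge>0. profit2 l1 l2 t \<ge> profit2 l1 l2 (fst t, s))}"

end

theory Submission
  imports Defs
begin

lemma lat_cont:
  assumes "latency_class l"
  shows "continuous_on {0..} l"
proof -
  obtain l' where d: "\<forall>x\<ge>0. (l has_real_derivative l' x) (at x within {0..})"
    using assms unfolding latency_class_def by blast
  show ?thesis unfolding continuous_on_eq_continuous_within
    using d DERIV_continuous by (metis atLeast_iff)
qed

lemma lat_mono:
  assumes "latency_class l" "0 \<le> a" "a < b"
  shows "l a < l b"
  using assms unfolding latency_class_def strict_mono_on_def by auto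

lemma lat_deriv:
  assumes "latency_class l" "x > 0"
  shows "\<exists>d. (l has_real_derivative d) (at x) \<and> d > 0"
proof -
  obtain l' where d: "\<forall>x\<ge>0. (l has_real_derivative l' x) (at x within {0..})"
    using assms unfolding latency_class_def by blast
  have cv: "convex_on {0..} l" using assms unfolding latency_class_def by blast
  have dw: "(l has_real_derivative l' x) (at x within {0..})" using d assms by auto
  have "at x within {0..} = at x" using assms by (intro at_within_interior) auto
  hence da: "(l has_real_derivative l' x) (at x)" using dw by simp
  have "l 0 - l x \<ge> l' x * (0 - x)"
    by (rule convex_on_imp_above_tangent[OF cv _ _ _ dw]) (use assms in \<open>auto intro: convex_connected\<close>)
  moreover have "l 0 < l x" using lat_mono[OF assms(1) _ assms(2)] by simp
  ultimately have "l' x * x > 0" by simp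
  hence "l' x > 0" using assms(2) by (simp add: zero_less_mult_iff)
  thus ?thesis using da by blast
qed

lemma wardrop_unique_aux:
  assumes "latency_class l1" "latency_class l2"
    "wardrop l1 l2 t x" "wardrop l1 l2 t y" "fst x < fst y"
  shows False
proof -
  have y: "fst y > 0" "snd y \<ge> 0" "fst y + snd y = 1" "l1 (fst y) + fst t \<le> l2 (snd y) + snd t"
    using assms unfolding wardrop_def by auto
  have x: "fst x \<ge> 0" "fst x + snd x = 1" using assms unfolding wardrop_def by auto
  have "snd x > 0" using x y assms(5) by linarith
  hence x2: "l2 (snd x) + snd t \<le> l1 (fst x) + fst t" using assms(3) unfolding wardrop_def by auto
  have "snd y < snd x" using x y assms(5) by linarith
  hence "l2 (snd y) < l2 (snd x)" using lat_mono[OF assms(2) y(2)] by blast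
  moreover have "l1 (fst x) < l1 (fst y)" using lat_mono[OF assms(1) x(1) assms(5)] .
  ultimately show False using x2 y(4) by linarith
qed

lemma wardrop_unique:
  assumes "latency_class l1" "latency_class l2"
    "wardrop l1 l2 t x" "wardrop l1 l2 t y"
  shows "x = y"
proof -
  have "\<not> fst x < fst y" "\<not> fst y < fst x"
    using wardrop_unique_aux assms by blast+
  hence "fst x = fst y" by simp
  moreover have "snd x = snd y" using assms(3,4) calculation unfolding wardrop_def by auto
  ultimately show ?thesis by (simp add: prod_eq_iff)
qed

lemma wardrop_exists:
  assumes "latency_class l1" "latency_class l2"
  shows "\<exists>x. wardrop l1 l2 t x"
proof -
  define f where "f y = l1 y + fst t - l2 (1 - y) - snd t" for y
  have c1: "continuous_on {0..} l1" "continuous_on {0..} l2" using lat_cont assms by auto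
  have c2: "continuous_on {0..1} (\<lambda>y. l2 (1 - y))"
    by (rule continuous_on_compose2[OF c1(2)]) (auto intro!: continuous_intros)
  have cf: "continuous_on {0..1} f" unfolding f_def
    by (intro continuous_intros c2 continuous_on_subset[OF c1(1)]) auto
  show ?thesis
  proof (cases "f 0 \<ge> 0")
    case True
    hence "wardrop l1 l2 t (0, 1)" unfolding wardrop_def f_def by auto
    thus ?thesis by blast
  next
    case F0: False
    show ?thesis
    proof (cases "f 1 \<le> 0")
      case True
      hence "wardrop l1 l2 t (1, 0)" unfolding wardrop_def f_def by auto
      thus ?thesis by blast
    next
      case False
      obtain y where y: "0 \<le> y" "y \<le> 1" "f y = 0"
        using IVT'[of f 0 0 1] cf F0 False by auto
      hence "wardrop l1 l2 t (y, 1 - y)" unfolding wardrop_def f_def by auto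
      thus ?thesis by blast
    qed
  qed
qed

lemma eqflow_wardrop:
  assumes "latency_class l1" "latency_class l2"
  shows "wardrop l1 l2 t (eqflow l1 l2 t)"
  unfolding eqflow_def
  using wardrop_exists[OF assms] wardrop_unique[OF assms] by (metis theI)

lemma eqflow_eq:
  assumes "latency_class l1" "latency_class l2" "wardrop l1 l2 t x"
  shows "eqflow l1 l2 t = x"
  using eqflow_wardrop[OF assms(1,2)] wardrop_unique[OF assms(1,2)] assms(3) by blast


lemma foc:
  assumes L1: "latency_class l1" and L2: "latency_class l2"
    and t1: "t1 \<ge> 0"
    and opt: "\<forall>s\<ge>0. profit1 l1 l2 (t1, t2) \<ge> profit1 l1 l2 (s, t2)"
    and x1p: "fst (eqflow l1 l2 (t1, t2)) > 0" and x2p: "snd (eqflow l1 l2 (t1, t2)) > 0"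
    and D1: "(l1 has_real_derivative d1) (at (fst (eqflow l1 l2 (t1, t2))))"
    and D2: "(l2 has_real_derivative d2) (at (1 - fst (eqflow l1 l2 (t1, t2))))"
  shows "t1 = fst (eqflow l1 l2 (t1, t2)) * (d1 + d2)"
proof -
  define x1 where "x1 = fst (eqflow l1 l2 (t1, t2))"
  have W: "wardrop l1 l2 (t1, t2) (eqflow l1 l2 (t1, t2))" using eqflow_wardrop[OF L1 L2] .
  have x2: "snd (eqflow l1 l2 (t1, t2)) = 1 - x1" using W unfolding wardrop_def x1_def by auto
  have x1p': "x1 > 0" "x1 < 1" using x1p x2p x2 unfolding x1_def by auto
  have eq: "l1 x1 + t1 = l2 (1 - x1) + t2" using W x1p x2p x2 unfolding wardrop_def x1_def by auto
  define S where "S y = t2 + l2 (1 - y) - l1 y" for y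
  define P where "P y = y * S y" for y
  have Sx: "S x1 = t1" using eq unfolding S_def by simp
  have Pprof: "profit1 l1 l2 (t1, t2) = P x1" unfolding profit1_def P_def x1_def[symmetric] Sx by simp
  have Ple: "P y \<le> P x1" if "0 < y" "y < 1" "S y \<ge> 0" for y
  proof -
    have "wardrop l1 l2 (S y, t2) (y, 1 - y)" using that unfolding wardrop_def S_def by auto
    hence "eqflow l1 l2 (S y, t2) = (y, 1 - y)" using eqflow_eq[OF L1 L2] by blast
    hence "profit1 l1 l2 (S y, t2) = P y" unfolding profit1_def P_def by (simp add: mult.commute)
    thus ?thesis using opt that Pprof by metis
  qed
  have t1p: "t1 > 0"
  proof (rule ccontr)
    assume "\<not> t1 > 0"
    hence t0: "t1 = 0" using t1 by simp
    have "l1 (x1/2) < l1 x1" using lat_mono[OF L1, of "x1/2" x1] x1p' by simp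
    moreover have "l2 (1 - x1) < l2 (1 - x1/2)" using lat_mono[OF L2, of "1 - x1" "1 - x1/2"] x1p' by simp
    ultimately have "S (x1/2) > S x1" unfolding S_def by simp
    hence Sp: "S (x1/2) > 0" using Sx t0 by simp
    hence "P (x1/2) > 0" unfolding P_def using x1p' by simp
    moreover have "P (x1/2) \<le> P x1" using Ple[of "x1/2"] x1p' Sp by simp
    moreover have "P x1 = 0" unfolding P_def Sx t0 by simp
    ultimately show False by simp
  qed
  have D2': "((\<lambda>y. l2 (1 - y)) has_real_derivative d2 * (-1)) (at x1)"
  proof -
    have g: "((\<lambda>y. 1 - y) has_real_derivative (-1)) (at x1)" by (auto intro!: derivative_eq_intros)
    show ?thesis using DERIV_chain2[where f=l2 and g="\<lambda>y. 1 - y", OF D2[folded x1_def] g] by simp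
  qed
  have DS: "(S has_real_derivative (d2 * (-1) - d1)) (at x1)"
    unfolding S_def using D2' D1[folded x1_def] by (auto intro!: derivative_eq_intros)
  have DP: "(P has_real_derivative (S x1 + x1 * (d2 * (-1) - d1))) (at x1)"
    unfolding P_def[abs_def] using DS by (auto intro!: derivative_eq_intros)
  have "isCont S x1" using DS by (rule DERIV_isCont)
  hence ev1: "eventually (\<lambda>y. S y > 0) (at x1)"
    using order_tendstoD(1)[of S "S x1" "at x1" 0] t1p Sx unfolding isCont_def by auto
  have ev2: "eventually (\<lambda>y. y > 0) (at x1)"
    using order_tendstoD(1)[OF tendsto_ident_at, of 0 x1 UNIV] x1p' by auto
  have ev3: "eventually (\<lambda>y. y < 1) (at x1)"
    using order_tendstoD(2)[OF tendsto_ident_at, of x1 1 UNIV] x1p' by auto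
  have "eventually (\<lambda>y. P y \<le> P x1) (at x1)"
    using eventually_conj[OF ev1 eventually_conj[OF ev2 ev3]] by eventually_elim (auto intro: Ple)
  then obtain d where d: "d > 0" "\<forall>y. y \<noteq> x1 \<and> dist y x1 < d \<longrightarrow> P y \<le> P x1"
    unfolding eventually_at by auto
  have "\<forall>y. \<bar>x1 - y\<bar> < d \<longrightarrow> P y \<le> P x1"
    using d(2) by (metis dist_real_def abs_minus_commute order_refl)
  hence "S x1 + x1 * (d2 * (-1) - d1) = 0" using DERIV_local_max[OF DP d(1)] by blast
  thus ?thesis using Sx unfolding x1_def by (simp add: algebra_simps)
qed


lemma eqflow_swap:
  assumes L1: "latency_class l1" and L2: "latency_class l2"
  shows "eqflow l2 l1 (b, a) = (snd (eqflow l1 l2 (a, b)), fst (eqflow l1 l2 (a, b)))"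
proof -
  have "wardrop l1 l2 (a, b) (eqflow l1 l2 (a, b))" using eqflow_wardrop[OF L1 L2] .
  hence "wardrop l2 l1 (b, a) (snd (eqflow l1 l2 (a, b)), fst (eqflow l1 l2 (a, b)))"
    unfolding wardrop_def by auto
  thus ?thesis using eqflow_eq[OF L2 L1] by blast
qed

lemma profit2_swap:
  assumes L1: "latency_class l1" and L2: "latency_class l2"
  shows "profit2 l1 l2 (a, b) = profit1 l2 l1 (b, a)"
  unfolding profit1_def profit2_def using eqflow_swap[OF L1 L2] by simp

theorem mainTheorem9:
  fixes l1 l2 :: "real \<Rightarrow> real" and t :: "real \<times> real"
  assumes "latency_class l1" and "latency_class l2"
    and "t \<in> T_inf l1 l2"
    and "fst (eqflow l1 l2 t) > 0" and "snd (eqflow l1 l2 t) > 0"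
  shows "fst (eqflow l1 l2 (0, 0)) \<ge> fst (eqflow l1 l2 t)
           \<longleftrightarrow> fst (eqflow l1 l2 t) \<ge> 1 / 2"
proof -
  note L1 = assms(1) and L2 = assms(2)
  obtain t1 t2 where tt: "t = (t1, t2)" by (cases t)
  define x1 where "x1 = fst (eqflow l1 l2 t)"
  define x2 where "x2 = snd (eqflow l1 l2 t)"
  have T: "t1 \<ge> 0" "t2 \<ge> 0" "\<forall>s\<ge>0. profit1 l1 l2 (t1, t2) \<ge> profit1 l1 l2 (s, t2)"
    "\<forall>s\<ge>0. profit2 l1 l2 (t1, t2) \<ge> profit2 l1 l2 (t1, s)"
    using assms(3) unfolding T_inf_def tt by auto
  have W: "wardrop l1 l2 t (eqflow l1 l2 t)" using eqflow_wardrop[OF L1 L2] .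
  have xs: "x2 = 1 - x1" "x1 > 0" "x2 > 0" using W assms(4,5) unfolding wardrop_def x1_def x2_def by auto
  have eq: "l1 x1 + t1 = l2 x2 + t2" using W xs unfolding wardrop_def x1_def x2_def tt by auto
  obtain d1 where d1: "(l1 has_real_derivative d1) (at x1)" "d1 > 0" using lat_deriv[OF L1 xs(2)] by blast
  obtain d2 where d2: "(l2 has_real_derivative d2) (at x2)" "d2 > 0" using lat_deriv[OF L2 xs(3)] by blast
  have F1: "t1 = x1 * (d1 + d2)"
    using foc[OF L1 L2 T(1) T(3), of d1 d2] assms(4,5) d1 d2 xs unfolding x1_def x2_def tt by simp
  have sw: "eqflow l2 l1 (t2, t1) = (x2, x1)" using eqflow_swap[OF L1 L2] unfolding x1_def x2_def tt by simp
  have opt2: "\<forall>s\<ge>0. profit1 l2 l1 (t2, t1) \<ge> profit1 l2 l1 (s, t1)"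
    using T(4) profit2_swap[OF L1 L2] by metis
  have F2: "t2 = x2 * (d2 + d1)"
    using foc[OF L2 L1 T(2) opt2, of d2 d1] sw d1 d2 xs by simp
  have key: "t1 \<ge> t2 \<longleftrightarrow> x1 \<ge> 1/2"
  proof -
    have "t1 - t2 = (x1 - x2) * (d1 + d2)" using F1 F2 by (simp add: algebra_simps)
    moreover have "d1 + d2 > 0" using d1 d2 by simp
    ultimately have "t1 \<ge> t2 \<longleftrightarrow> x1 \<ge> x2"
      by (metis diff_ge_0_iff_ge zero_le_mult_iff not_less mult_pos_pos less_eq_real_def)
    thus ?thesis using xs by linarith
  qed
  define y1 where "y1 = fst (eqflow l1 l2 (0, 0))"
  define y2 where "y2 = snd (eqflow l1 l2 (0, 0))"
  have W0: "wardrop l1 l2 (0, 0) (eqflow l1 l2 (0, 0))" using eqflow_wardrop[OF L1 L2] .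
  have ys: "y2 = 1 - y1" "y1 \<ge> 0" "y2 \<ge> 0" "y1 > 0 \<Longrightarrow> l1 y1 \<le> l2 y2" "y2 > 0 \<Longrightarrow> l2 y2 \<le> l1 y1"
    using W0 unfolding wardrop_def y1_def y2_def by auto
  have "y1 \<ge> x1 \<longleftrightarrow> t1 \<ge> t2"
  proof
    assume a: "y1 \<ge> x1"
    show "t1 \<ge> t2"
    proof (rule ccontr)
      assume "\<not> t1 \<ge> t2"
      have "l1 x1 \<le> l1 y1" using lat_mono[OF L1, of x1 y1] a xs by (cases "x1 = y1") auto
      also have "\<dots> \<le> l2 y2" using ys a xs by simp
      also have "\<dots> \<le> l2 x2" using lat_mono[OF L2, of y2 x2] a xs ys by (cases "y2 = x2") auto
      finally show False using eq \<open>\<not> t1 \<ge> t2\<close> by linarith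
    qed
  next
    assume a: "t1 \<ge> t2"
    show "y1 \<ge> x1"
    proof (rule ccontr)
      assume b: "\<not> y1 \<ge> x1"
      have "l2 x2 < l2 y2" using lat_mono[OF L2, of x2 y2] b xs ys by simp
      also have "\<dots> \<le> l1 y1" using ys b xs by simp
      also have "\<dots> < l1 x1" using lat_mono[OF L1, of y1 x1] b ys by simp
      finally show False using eq a by linarith
    qed
  qed
  thus ?thesis using key unfolding x1_def y1_def by simp
qed

end
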